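(* For every $\varepsilon,\delta\in(0,1)$ there exists an orchestration problem $P_{\varepsilon,\delta}$ (with at least two agents of different long-running correctness) such that, if $A_{\mathrm{rand}}$ denotes an agent of $P_{\varepsilon,\delta}$ chosen uniformly at random, then with probability at least $1-\delta$, $$\frac{\mathsf{C}_{\max}}{\mathsf{C}(A_{\mathrm{rand}})}\;\geq\;\min_{k,h\colon \mathsf{C}(A_k)\neq \mathsf{C}(A_h)} d(A_k,A_h)\;\geq\;\frac{1}{1-\varepsilon}.$$ In particular, these problems satisfy, for each fixed $\varepsilon\in(0,1)$, $$\lim_{\delta\to 0}\frac{\mathsf{C}_{\max}}{\mathsf{C}_{\mathrm{rand}}}\;\geq\;\frac{1}{1-\varepsilon},$$ where $\mathsf{C}_{\max}$ and $\mathsf{C}_{\mathrm{rand}}$ are computed for $P_{\varepsilon,\delta}$.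
   Context: An orchestration problem consists of finitely many mutually exclusive regions $\mathcal{R}_1,\dots,\mathcal{R}_M$ partitioning the input distribution, with region probabilities $\mathbb{P}(\mathcal{R}_m)\ge 0$ summing to $1$, and a finite set of agents $A_1,\dots,A_K$, each with a probability of correctness $\mathbb{P}(A_k\mid\mathcal{R}_m)\in(0,1]$ in each region (all assumed non-zero). The long-running correctness of agent $A_k$ is $\mathsf{C}(A_k)=\sum_{m=1}^M \mathbb{P}(\mathcal{R}_m)\,\mathbb{P}(A_k\mid\mathcal{R}_m)$. The theoretical maximum correctness is $\mathsf{C}_{\max}=\sum_{m=1}^M \mathbb{P}(\mathcal{R}_m)\max_k \mathbb{P}(A_k\mid\mathcal{R}_m)$ (achieved by picking, in each region, the most correct agent). If $A_{\mathrm{rand}}$ is an agent chosen uniformly at random from $\{A_1,\dots,A_K\}$, then $\mathsf{C}(A_{\mathrm{rand}})$ is a random variable and $\mathsf{C}_{\mathrm{rand}}=\mathbb{E}[\mathsf{C}(A_{\mathrm{rand}})]$. The dissimilarity of two agents is $d(A_k,A_h)=\max_m \exp\left|\log\frac{\mathbb{P}(A_k\mid\mathcal{R}_m)}{\mathbb{P}(A_h\mid\mathcal{R}_m)}\right|$. *)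

theory Defs
  imports "HOL-Analysis.Analysis"
begin

text \<open>An orchestration problem with regions indexed by m < M and agents indexed by k < K.
  p m = probability of region m; q k m = probability of correctness of agent k in region m.\<close>

definition orch_problem :: "nat \<Rightarrow> nat \<Rightarrow> (nat \<Rightarrow> real) \<Rightarrow> (nat \<Rightarrow> nat \<Rightarrow> real) \<Rightarrow> bool" where
  "orch_problem M K p q \<longleftrightarrow>
     K \<ge> 1 \<and> (\<forall>m<M. p m \<ge> 0) \<and> (\<Sum>m<M. p m) = 1 \<and>
     (\<forall>k<K. \<forall>m<M. 0 < q k m \<and> q k m \<le> 1)"

definition correctness :: "nat \<Rightarrow> (nat \<Rightarrow> real) \<Rightarrow> (nat \<Rightarrow> nat \<Rightarrow> real) \<Rightarrow> nat \<Rightarrow> real" where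
  "correctness M p q k = (\<Sum>m<M. p m * q k m)"

definition C_max :: "nat \<Rightarrow> nat \<Rightarrow> (nat \<Rightarrow> real) \<Rightarrow> (nat \<Rightarrow> nat \<Rightarrow> real) \<Rightarrow> real" where
  "C_max M K p q = (\<Sum>m<M. p m * Max {q k m | k. k < K})"

definition C_rand :: "nat \<Rightarrow> nat \<Rightarrow> (nat \<Rightarrow> real) \<Rightarrow> (nat \<Rightarrow> nat \<Rightarrow> real) \<Rightarrow> real" where
  "C_rand M K p q = (\<Sum>k<K. correctness M p q k) / real K"

definition dissim :: "nat \<Rightarrow> (nat \<Rightarrow> nat \<Rightarrow> real) \<Rightarrow> nat \<Rightarrow> nat \<Rightarrow> real" where
  "dissim M q k h = Max {exp \<bar>ln (q k m / q h m)\<bar> | m. m < M}"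

definition min_dissim :: "nat \<Rightarrow> nat \<Rightarrow> (nat \<Rightarrow> real) \<Rightarrow> (nat \<Rightarrow> nat \<Rightarrow> real) \<Rightarrow> real" where
  "min_dissim M K p q = Min {dissim M q k h | k h. k < K \<and> h < K \<and>
       correctness M p q k \<noteq> correctness M p q h}"

end

theory Submission imports Defs begin

definition qq :: "real \<Rightarrow> nat \<Rightarrow> nat \<Rightarrow> real" where
  "qq e k m = (if k = 0 then 1 else (1 - e) / 2)"

lemma corr: "correctness (Suc 0) (\<lambda>_. 1) (qq e) k = qq e k 0"
  by (simp add: correctness_def)

lemma cmax: assumes "0<e" "e<1" "n \<ge> 1" shows "C_max 1 n (\<lambda>_. 1) (qq e) = 1"
proof -
  have "{qq e k 0 | k. k < n} = {1} \<union> (if n \<ge> 2 then {(1-e)/2} else {})"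
  proof (intro set_eqI iffI)
    fix x assume "x \<in> {qq e k 0 | k. k < n}"
    then show "x \<in> {1} \<union> (if n \<ge> 2 then {(1-e)/2} else {})"
      using assms by (auto simp: qq_def split: if_splits)
  next
    fix x assume "x \<in> {1} \<union> (if n \<ge> 2 then {(1-e)/2} else {})"
    then have "x = qq e 0 0 \<and> 0 < n \<or> x = qq e 1 0 \<and> 1 < n"
      using assms by (auto simp: qq_def split: if_splits)
    then show "x \<in> {qq e k 0 | k. k < n}" by blast
  qed
  moreover have "Max ({1} \<union> (if n \<ge> 2 then {(1-e)/2} else {})) = (1::real)"
    using assms by auto
  ultimately show ?thesis by (simp add: C_max_def)
qed

lemma md: assumes "0<e" "e<1" "n \<ge> 2" shows "min_dissim 1 n (\<lambda>_. 1) (qq e) = 2/(1-e)"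
proof -
  have d: "dissim (Suc 0) (qq e) k h = exp \<bar>ln (qq e k 0 / qq e h 0)\<bar>" for k h
    by (simp add: dissim_def)
  have l: "\<bar>ln ((1-e)/2)\<bar> = ln (2/(1-e))" using assms
    by (simp add: ln_div)
  have l2: "\<bar>ln (2/(1-e))\<bar> = ln (2/(1-e))" using assms
    by (simp add: ln_div)
  have "{dissim 1 (qq e) k h | k h. k < n \<and> h < n \<and>
       correctness 1 (\<lambda>_. 1) (qq e) k \<noteq> correctness 1 (\<lambda>_. 1) (qq e) h} = {2/(1-e)}"
  proof (intro set_eqI iffI)
    fix x assume "x \<in> {dissim 1 (qq e) k h | k h. k < n \<and> h < n \<and>
       correctness 1 (\<lambda>_. 1) (qq e) k \<noteq> correctness 1 (\<lambda>_. 1) (qq e) h}"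
    then obtain k h where "x = dissim 1 (qq e) k h" "correctness 1 (\<lambda>_. 1) (qq e) k \<noteq> correctness 1 (\<lambda>_. 1) (qq e) h" by blast
    then show "x \<in> {2/(1-e)}" using assms l l2
      by (auto simp: d corr qq_def split: if_splits)
  next
    fix x assume "x \<in> {2/(1-e)}"
    then have "x = dissim 1 (qq e) 0 1 \<and> 0 < n \<and> 1 < n \<and> correctness 1 (\<lambda>_. 1) (qq e) 0 \<noteq> correctness 1 (\<lambda>_. 1) (qq e) 1"
      using assms l2 by (auto simp: d corr qq_def)
    then show "x \<in> {dissim 1 (qq e) k h | k h. k < n \<and> h < n \<and>
       correctness 1 (\<lambda>_. 1) (qq e) k \<noteq> correctness 1 (\<lambda>_. 1) (qq e) h}" by blast
  qed
  then show ?thesis by (simp add: min_dissim_def)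
qed

lemma crand: assumes "n \<ge> 1" shows "C_rand 1 n (\<lambda>_. 1) (qq e) = (1 + (real n - 1) * ((1-e)/2)) / real n"
proof -
  have "(\<Sum>k<n. qq e k 0) = (\<Sum>k\<in>insert 0 {1..<n}. qq e k 0)"
    using assms by (intro sum.cong) auto
  also have "\<dots> = 1 + (real n - 1) * ((1-e)/2)" using assms by (simp add: qq_def of_nat_diff)
  finally show ?thesis by (simp add: C_rand_def corr)
qed


definition KK :: "real \<Rightarrow> real \<Rightarrow> nat" where
  "KK e d = nat \<lceil>1/d + 2/(1-e)\<rceil> + 1"

lemma KK_bounds: assumes "0<e" "e<1" "0<d"
  shows "real (KK e d) \<ge> 1/d + 2/(1-e)" "KK e d \<ge> 2"
proof -
  have "real (KK e d) = real (nat \<lceil>1/d + 2/(1-e)\<rceil>) + 1" by (simp add: KK_def)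
  moreover have "real (nat \<lceil>1/d + 2/(1-e)\<rceil>) \<ge> 1/d + 2/(1-e)"
    by (rule real_nat_ceiling_ge)
  ultimately have A: "real (KK e d) \<ge> 1/d + 2/(1-e) + 1" by simp
  thus "real (KK e d) \<ge> 1/d + 2/(1-e)" by simp
  have "1/d > 0" "2/(1-e) > 0" using assms by auto
  with A have "real (KK e d) > 1" by linarith
  hence "KK e d > 1" by (metis of_nat_1 of_nat_less_iff)
  thus "KK e d \<ge> 2" by simp
qed

lemma main_fixed: assumes e: "0<e" "e<1" and d: "0<d" "d<1"
  defines "n \<equiv> KK e d"
  shows "orch_problem 1 n (\<lambda>_. 1) (qq e) \<and> n \<ge> 2 \<and>
        (\<exists>k<n. \<exists>h<n. correctness 1 (\<lambda>_. 1) (qq e) k \<noteq> correctness 1 (\<lambda>_. 1) (qq e) h) \<and>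
        real (card {k. k < n \<and>
            C_max 1 n (\<lambda>_. 1) (qq e) / correctness 1 (\<lambda>_. 1) (qq e) k
              \<ge> min_dissim 1 n (\<lambda>_. 1) (qq e)}) \<ge> (1 - d) * real n \<and>
        min_dissim 1 n (\<lambda>_. 1) (qq e) \<ge> 1 / (1 - e)"
    and "C_max 1 n (\<lambda>_. 1) (qq e) / C_rand 1 n (\<lambda>_. 1) (qq e) \<ge> 1 / (1 - e)"
proof -
  have n2: "n \<ge> 2" and nb: "real n \<ge> 1/d + 2/(1-e)" using KK_bounds[OF e d(1)] n_def by auto
  have op: "orch_problem 1 n (\<lambda>_. 1) (qq e)" using n2 e by (auto simp: orch_problem_def qq_def)
  have ex: "\<exists>k<n. \<exists>h<n. correctness 1 (\<lambda>_. 1) (qq e) k \<noteq> correctness 1 (\<lambda>_. 1) (qq e) h"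
  proof -
    have "correctness 1 (\<lambda>_. 1) (qq e) 0 \<noteq> correctness 1 (\<lambda>_. 1) (qq e) 1"
      using e by (simp add: corr qq_def)
    moreover have "0 < n" "1 < n" using n2 by auto
    ultimately show ?thesis by blast
  qed
  have cm: "C_max 1 n (\<lambda>_. 1) (qq e) = 1" using cmax e n2 by simp
  have mdv: "min_dissim 1 n (\<lambda>_. 1) (qq e) = 2/(1-e)" using md e n2 by simp
  have sub: "{1..<n} \<subseteq> {k. k < n \<and>
            C_max 1 n (\<lambda>_. 1) (qq e) / correctness 1 (\<lambda>_. 1) (qq e) k
              \<ge> min_dissim 1 n (\<lambda>_. 1) (qq e)}"
    unfolding cm mdv using e by (auto simp: corr qq_def)
  have c1: "card {1..<n} \<le> card {k. k < n \<and>
            C_max 1 n (\<lambda>_. 1) (qq e) / correctness 1 (\<lambda>_. 1) (qq e) k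
              \<ge> min_dissim 1 n (\<lambda>_. 1) (qq e)}"
    by (rule card_mono[OF _ sub]) auto
  have c2: "(1 - d) * real n \<le> real (n - 1)"
  proof -
    have "2/(1-e) > 0" using e by simp
    hence "1/d \<le> real n" using nb by linarith
    hence "1 \<le> d * real n" using d by (simp add: field_simps)
    thus ?thesis using n2 by (simp add: of_nat_diff algebra_simps)
  qed
  have cardp: "real (card {k. k < n \<and>
            C_max 1 n (\<lambda>_. 1) (qq e) / correctness 1 (\<lambda>_. 1) (qq e) k
              \<ge> min_dissim 1 n (\<lambda>_. 1) (qq e)}) \<ge> (1 - d) * real n"
  proof -
    have "real (n - 1) \<le> real (card {k. k < n \<and>
            C_max 1 n (\<lambda>_. 1) (qq e) / correctness 1 (\<lambda>_. 1) (qq e) k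
              \<ge> min_dissim 1 n (\<lambda>_. 1) (qq e)})"
      using c1 by (simp only: card_atLeastLessThan of_nat_le_iff)
    thus ?thesis using c2 by linarith
  qed
  have mdb: "min_dissim 1 n (\<lambda>_. 1) (qq e) \<ge> 1 / (1 - e)" using mdv e
    by (simp add: divide_right_mono)
  have cr: "C_rand 1 n (\<lambda>_. 1) (qq e) = (1 + (real n - 1) * ((1-e)/2)) / real n"
    using crand n2 by simp
  have rat: "C_max 1 n (\<lambda>_. 1) (qq e) / C_rand 1 n (\<lambda>_. 1) (qq e) \<ge> 1 / (1 - e)"
  proof -
    have pos: "1 + (real n - 1) * ((1-e)/2) > 0" using e n2 by (simp add: add_pos_nonneg)
    have "1/d > 0" using d by simp
    hence "2/(1-e) \<le> real n + 1" using nb by linarith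
    hence "2 \<le> (real n + 1) * (1 - e)" using e by (simp add: field_simps)
    hence "1 + (real n - 1) * ((1-e)/2) \<le> real n * (1 - e)" by (simp add: field_simps)
    hence "1 / (1-e) \<le> real n / (1 + (real n - 1) * ((1-e)/2))"
      using pos e n2 by (simp add: field_simps)
    moreover have "1 / ((1 + (real n - 1) * ((1-e)/2)) / real n) = real n / (1 + (real n - 1) * ((1-e)/2))"
      by simp
    ultimately show ?thesis unfolding cm cr by simp
  qed
  show "C_max 1 n (\<lambda>_. 1) (qq e) / C_rand 1 n (\<lambda>_. 1) (qq e) \<ge> 1 / (1 - e)" by (rule rat)
  show "orch_problem 1 n (\<lambda>_. 1) (qq e) \<and> n \<ge> 2 \<and>
        (\<exists>k<n. \<exists>h<n. correctness 1 (\<lambda>_. 1) (qq e) k \<noteq> correctness 1 (\<lambda>_. 1) (qq e) h) \<and>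
        real (card {k. k < n \<and>
            C_max 1 n (\<lambda>_. 1) (qq e) / correctness 1 (\<lambda>_. 1) (qq e) k
              \<ge> min_dissim 1 n (\<lambda>_. 1) (qq e)}) \<ge> (1 - d) * real n \<and>
        min_dissim 1 n (\<lambda>_. 1) (qq e) \<ge> 1 / (1 - e)"
    by (intro conjI op n2 ex cardp mdb)
qed

theorem theorem1:
  shows "\<exists>(M :: real \<Rightarrow> real \<Rightarrow> nat) (K :: real \<Rightarrow> real \<Rightarrow> nat)
           (p :: real \<Rightarrow> real \<Rightarrow> nat \<Rightarrow> real) (q :: real \<Rightarrow> real \<Rightarrow> nat \<Rightarrow> nat \<Rightarrow> real).
     (\<forall>\<epsilon> \<delta>. 0 < \<epsilon> \<and> \<epsilon> < 1 \<and> 0 < \<delta> \<and> \<delta> < 1 \<longrightarrow>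
        orch_problem (M \<epsilon> \<delta>) (K \<epsilon> \<delta>) (p \<epsilon> \<delta>) (q \<epsilon> \<delta>) \<and>
        K \<epsilon> \<delta> \<ge> 2 \<and>
        (\<exists>k<K \<epsilon> \<delta>. \<exists>h<K \<epsilon> \<delta>.
           correctness (M \<epsilon> \<delta>) (p \<epsilon> \<delta>) (q \<epsilon> \<delta>) k \<noteq> correctness (M \<epsilon> \<delta>) (p \<epsilon> \<delta>) (q \<epsilon> \<delta>) h) \<and>
        real (card {k. k < K \<epsilon> \<delta> \<and>
            C_max (M \<epsilon> \<delta>) (K \<epsilon> \<delta>) (p \<epsilon> \<delta>) (q \<epsilon> \<delta>) / correctness (M \<epsilon> \<delta>) (p \<epsilon> \<delta>) (q \<epsilon> \<delta>) k
              \<ge> min_dissim (M \<epsilon> \<delta>) (K \<epsilon> \<delta>) (p \<epsilon> \<delta>) (q \<epsilon> \<delta>)})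
          \<ge> (1 - \<delta>) * real (K \<epsilon> \<delta>) \<and>
        min_dissim (M \<epsilon> \<delta>) (K \<epsilon> \<delta>) (p \<epsilon> \<delta>) (q \<epsilon> \<delta>) \<ge> 1 / (1 - \<epsilon>)) \<and>
     (\<forall>\<epsilon>. 0 < \<epsilon> \<and> \<epsilon> < 1 \<longrightarrow>
        (\<forall>\<eta>>0. eventually (\<lambda>\<delta>.
            C_max (M \<epsilon> \<delta>) (K \<epsilon> \<delta>) (p \<epsilon> \<delta>) (q \<epsilon> \<delta>) / C_rand (M \<epsilon> \<delta>) (K \<epsilon> \<delta>) (p \<epsilon> \<delta>) (q \<epsilon> \<delta>)
              \<ge> 1 / (1 - \<epsilon>) - \<eta>) (at_right 0)))"
proof -
  let ?M = "\<lambda>(e::real) (d::real). 1::nat"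
  let ?p = "\<lambda>(e::real) (d::real) (m::nat). 1::real"
  let ?q = "\<lambda>(e::real) (d::real). qq e"
  have A: "\<forall>\<epsilon> \<delta>. 0 < \<epsilon> \<and> \<epsilon> < 1 \<and> 0 < \<delta> \<and> \<delta> < 1 \<longrightarrow>
        orch_problem (?M \<epsilon> \<delta>) (KK \<epsilon> \<delta>) (?p \<epsilon> \<delta>) (?q \<epsilon> \<delta>) \<and>
        KK \<epsilon> \<delta> \<ge> 2 \<and>
        (\<exists>k<KK \<epsilon> \<delta>. \<exists>h<KK \<epsilon> \<delta>.
           correctness (?M \<epsilon> \<delta>) (?p \<epsilon> \<delta>) (?q \<epsilon> \<delta>) k \<noteq> correctness (?M \<epsilon> \<delta>) (?p \<epsilon> \<delta>) (?q \<epsilon> \<delta>) h) \<and>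
        real (card {k. k < KK \<epsilon> \<delta> \<and>
            C_max (?M \<epsilon> \<delta>) (KK \<epsilon> \<delta>) (?p \<epsilon> \<delta>) (?q \<epsilon> \<delta>) / correctness (?M \<epsilon> \<delta>) (?p \<epsilon> \<delta>) (?q \<epsilon> \<delta>) k
              \<ge> min_dissim (?M \<epsilon> \<delta>) (KK \<epsilon> \<delta>) (?p \<epsilon> \<delta>) (?q \<epsilon> \<delta>)})
          \<ge> (1 - \<delta>) * real (KK \<epsilon> \<delta>) \<and>
        min_dissim (?M \<epsilon> \<delta>) (KK \<epsilon> \<delta>) (?p \<epsilon> \<delta>) (?q \<epsilon> \<delta>) \<ge> 1 / (1 - \<epsilon>)"
  proof (intro allI impI)
    fix e d :: real assume H: "0 < e \<and> e < 1 \<and> 0 < d \<and> d < 1"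
    show "orch_problem 1 (KK e d) (\<lambda>_. 1) (qq e) \<and> KK e d \<ge> 2 \<and>
        (\<exists>k<KK e d. \<exists>h<KK e d. correctness 1 (\<lambda>_. 1) (qq e) k \<noteq> correctness 1 (\<lambda>_. 1) (qq e) h) \<and>
        real (card {k. k < KK e d \<and>
            C_max 1 (KK e d) (\<lambda>_. 1) (qq e) / correctness 1 (\<lambda>_. 1) (qq e) k
              \<ge> min_dissim 1 (KK e d) (\<lambda>_. 1) (qq e)}) \<ge> (1 - d) * real (KK e d) \<and>
        min_dissim 1 (KK e d) (\<lambda>_. 1) (qq e) \<ge> 1 / (1 - e)"
      by (rule main_fixed(1)) (use H in auto)
  qed
  have B: "\<forall>\<epsilon>. 0 < \<epsilon> \<and> \<epsilon> < 1 \<longrightarrow>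
        (\<forall>\<eta>>0. eventually (\<lambda>\<delta>.
            C_max (?M \<epsilon> \<delta>) (KK \<epsilon> \<delta>) (?p \<epsilon> \<delta>) (?q \<epsilon> \<delta>) / C_rand (?M \<epsilon> \<delta>) (KK \<epsilon> \<delta>) (?p \<epsilon> \<delta>) (?q \<epsilon> \<delta>)
              \<ge> 1 / (1 - \<epsilon>) - \<eta>) (at_right 0))"
  proof (intro allI impI)
    fix e eta :: real assume e: "0 < e \<and> e < 1" and eta: "eta > 0"
    have "eventually (\<lambda>d::real. 0 < d \<and> d < 1) (at_right 0)"
      by (simp add: eventually_at_right_less eventually_conj eventually_at_right_field) (meson zero_less_one)
    then show "eventually (\<lambda>d.
            C_max (?M e d) (KK e d) (?p e d) (?q e d) / C_rand (?M e d) (KK e d) (?p e d) (?q e d)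
              \<ge> 1 / (1 - e) - eta) (at_right 0)"
    proof (rule eventually_mono)
      fix d :: real assume "0 < d \<and> d < 1"
      then have "C_max 1 (KK e d) (\<lambda>_. 1) (qq e) / C_rand 1 (KK e d) (\<lambda>_. 1) (qq e) \<ge> 1/(1-e)"
        by (intro main_fixed(2)) (use e in auto)
      then show "C_max (?M e d) (KK e d) (?p e d) (?q e d) / C_rand (?M e d) (KK e d) (?p e d) (?q e d)
              \<ge> 1 / (1 - e) - eta" using eta by simp
    qed
  qed
  show ?thesis
    apply (rule exI[where x="?M"])
    apply (rule exI[where x="KK"])
    apply (rule exI[where x="?p"])
    apply (rule exI[where x="?q"])
    apply (rule conjI[OF A B])
    done
qed

end
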